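(* Let $X$ be a presheaf of sets on $\mathscr{V}_f$ taking values in finite sets. For each $n\in\mathbb{N}$, let $X_n$ be the image of the composite $X\to\mathbb{F}[X]\to q_n\mathbb{F}[X]$, with the canonical surjection $X\twoheadrightarrow X_n$. Then $X_n$ is a finite presheaf of degree at most $n$, and $X\twoheadrightarrow X_n$ is the universal map from $X$ to a finite presheaf of degree at most $n$ (every map from $X$ to such a presheaf factors uniquely through it). These maps form a tower $\cdots\to X_{n+1}\to X_n\to X_{n-1}\to\cdots$ of maps under $X$.
   Context: $p$ prime, $\mathbb{F}=\mathbb{F}_p$, $\mathscr{V}_f$ finite-dimensional $\mathbb{F}$-vector spaces. $\mathscr{F}$ is the abelian category of functors $\mathscr{V}_f^{\mathrm{op}}\to$ ($\mathbb{F}$-vector spaces). $\mathbb{F}[X]\in\mathscr{F}$ is the sectionwise linearization of $X$, with unit $X\hookrightarrow\mathbb{F}[X]$. $q_n:\mathscr{F}\to\mathscr{F}$ is left adjoint to the inclusion of functors of Eilenberg–MacLane polynomial degree $\le n$, with universal quotient $F\twoheadrightarrow q_nF$. A presheaf $Y$ taking finite values is finite of degree at most $n$ if the composite $Y\to\mathbb{F}[Y]\to q_n\mathbb{F}[Y]$ is a monomorphism (equivalently, $Y$ embeds in a functor of $\mathscr{F}$ with a finite composition series and of polynomial degree $\le n$). *)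

theory Defs
  imports "Jordan_Normal_Form.Matrix" "HOL-Computational_Algebra.Primes"
begin

text \<open>Skeleton of V_f: object n is F^n; a morphism from F^m to F^n is a
matrix A in carrier_mat n m (acting by A *v _). Composition is matrix product.\<close>

definition presheaf :: "(nat \<Rightarrow> 'x set) \<Rightarrow> ('f::comm_ring_1 mat \<Rightarrow> 'x \<Rightarrow> 'x) \<Rightarrow> bool" where
  "presheaf X act \<longleftrightarrow>
     (\<forall>n m A x. A \<in> carrier_mat n m \<and> x \<in> X n \<longrightarrow> act A x \<in> X m) \<and>
     (\<forall>n x. x \<in> X n \<longrightarrow> act (1\<^sub>m n) x = x) \<and>
     (\<forall>n m k A B x. A \<in> carrier_mat n m \<and> B \<in> carrier_mat m k \<and> x \<in> X n
         \<longrightarrow> act (A * B) x = act B (act A x))"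

definition nat_trans ::
  "(nat \<Rightarrow> 'x set) \<Rightarrow> ('f::comm_ring_1 mat \<Rightarrow> 'x \<Rightarrow> 'x) \<Rightarrow>
   (nat \<Rightarrow> 'y set) \<Rightarrow> ('f mat \<Rightarrow> 'y \<Rightarrow> 'y) \<Rightarrow> (nat \<Rightarrow> 'x \<Rightarrow> 'y) \<Rightarrow> bool" where
  "nat_trans X actX Y actY h \<longleftrightarrow>
     (\<forall>n x. x \<in> X n \<longrightarrow> h n x \<in> Y n) \<and>
     (\<forall>n m A x. A \<in> carrier_mat n m \<and> x \<in> X n \<longrightarrow> h m (actX A x) = actY A (h n x))"

text \<open>Linearization F[X]: F[X](n) = F-valued functions supported on X n
(X n is finite), with the contravariant action given by pushforward.\<close>

definition lin :: "(nat \<Rightarrow> 'x set) \<Rightarrow> nat \<Rightarrow> ('x \<Rightarrow> 'f::field) set" where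
  "lin X n = {\<phi>. \<forall>x. x \<notin> X n \<longrightarrow> \<phi> x = 0}"

definition lin_map :: "(nat \<Rightarrow> 'x set) \<Rightarrow> ('f::field mat \<Rightarrow> 'x \<Rightarrow> 'x) \<Rightarrow> 'f mat \<Rightarrow> ('x \<Rightarrow> 'f) \<Rightarrow> ('x \<Rightarrow> 'f)" where
  "lin_map X act A \<phi> = (\<lambda>y. \<Sum>x\<in>{x \<in> X (dim_row A). act A x = y}. \<phi> x)"

definition unit_lin :: "'x \<Rightarrow> ('x \<Rightarrow> 'f::field)" where
  "unit_lin x = (\<lambda>y. if y = x then 1 else 0)"

definition lin_subfunctor :: "(nat \<Rightarrow> 'x set) \<Rightarrow> ('f::field mat \<Rightarrow> 'x \<Rightarrow> 'x) \<Rightarrow> (nat \<Rightarrow> ('x \<Rightarrow> 'f) set) \<Rightarrow> bool" where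
  "lin_subfunctor X act K \<longleftrightarrow>
     (\<forall>n. K n \<subseteq> lin X n \<and> (\<lambda>_. 0) \<in> K n \<and>
          (\<forall>a b. a \<in> K n \<longrightarrow> b \<in> K n \<longrightarrow> (\<lambda>z. a z + b z) \<in> K n) \<and>
          (\<forall>c a. a \<in> K n \<longrightarrow> (\<lambda>z. c * a z) \<in> K n)) \<and>
     (\<forall>n m A a. A \<in> carrier_mat n m \<and> a \<in> K n \<longrightarrow> lin_map X act A a \<in> K m)"

definition msum :: "nat \<Rightarrow> nat \<Rightarrow> (nat \<Rightarrow> 'f::comm_ring_1 mat) \<Rightarrow> nat set \<Rightarrow> 'f mat" where
  "msum w v fs I = mat w v (\<lambda>(i, j). \<Sum>k\<in>I. fs k $$ (i, j))"

text \<open>Eilenberg--MacLane (d+1)-st deviation of F[X] at maps fs 0, ..., fs d : F^v -> F^w,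
applied to an element of F[X](w).\<close>

definition deviation :: "(nat \<Rightarrow> 'x set) \<Rightarrow> ('f::field mat \<Rightarrow> 'x \<Rightarrow> 'x) \<Rightarrow> nat \<Rightarrow> nat \<Rightarrow> nat
     \<Rightarrow> (nat \<Rightarrow> 'f mat) \<Rightarrow> ('x \<Rightarrow> 'f) \<Rightarrow> ('x \<Rightarrow> 'f)" where
  "deviation X act d w v fs \<phi> =
     (\<lambda>z. \<Sum>I\<in>Pow {0..d}. (-1) ^ card I * lin_map X act (msum w v fs I) \<phi> z)"

definition quot_deg_le :: "(nat \<Rightarrow> 'x set) \<Rightarrow> ('f::field mat \<Rightarrow> 'x \<Rightarrow> 'x) \<Rightarrow> nat \<Rightarrow> (nat \<Rightarrow> ('x \<Rightarrow> 'f) set) \<Rightarrow> bool" where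
  "quot_deg_le X act d K \<longleftrightarrow>
     (\<forall>w v fs \<phi>. (\<forall>k\<in>{0..d}. fs k \<in> carrier_mat w v) \<and> \<phi> \<in> lin X w
        \<longrightarrow> deviation X act d w v fs \<phi> \<in> K v)"

text \<open>Kernel of the universal quotient F[X] -> q_d F[X]: the smallest subfunctor
with quotient of degree at most d.\<close>

definition qker :: "nat \<Rightarrow> (nat \<Rightarrow> 'x set) \<Rightarrow> ('f::field mat \<Rightarrow> 'x \<Rightarrow> 'x) \<Rightarrow> nat \<Rightarrow> ('x \<Rightarrow> 'f) set" where
  "qker d X act v = \<Inter> {K v | K. lin_subfunctor X act K \<and> quot_deg_le X act d K}"

text \<open>Elements of q_d F[X](v) are cosets phi + qker.\<close>

definition qcoset :: "nat \<Rightarrow> (nat \<Rightarrow> 'x set) \<Rightarrow> ('f::field mat \<Rightarrow> 'x \<Rightarrow> 'x) \<Rightarrow> nat \<Rightarrow> ('x \<Rightarrow> 'f) \<Rightarrow> ('x \<Rightarrow> 'f) set" where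
  "qcoset d X act v \<phi> = {(\<lambda>z. \<phi> z + k z) | k. k \<in> qker d X act v}"

definition proj :: "nat \<Rightarrow> (nat \<Rightarrow> 'x set) \<Rightarrow> ('f::field mat \<Rightarrow> 'x \<Rightarrow> 'x) \<Rightarrow> nat \<Rightarrow> 'x \<Rightarrow> ('x \<Rightarrow> 'f) set" where
  "proj d X act v x = qcoset d X act v (unit_lin x)"

text \<open>X_d: the image of X in q_d F[X], with action the restriction of that of q_d F[X].\<close>

definition trunc :: "nat \<Rightarrow> (nat \<Rightarrow> 'x set) \<Rightarrow> ('f::field mat \<Rightarrow> 'x \<Rightarrow> 'x) \<Rightarrow> nat \<Rightarrow> ('x \<Rightarrow> 'f) set set" where
  "trunc d X act v = proj d X act v ` X v"

definition trunc_act :: "nat \<Rightarrow> (nat \<Rightarrow> 'x set) \<Rightarrow> ('f::field mat \<Rightarrow> 'x \<Rightarrow> 'x)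
     \<Rightarrow> 'f mat \<Rightarrow> ('x \<Rightarrow> 'f) set \<Rightarrow> ('x \<Rightarrow> 'f) set" where
  "trunc_act d X act A c =
     {(\<lambda>z. lin_map X act A \<phi> z + k z) | \<phi> k. \<phi> \<in> c \<and> k \<in> qker d X act (dim_col A)}"

text \<open>Y (presheaf with finite values) is finite of degree at most d:
Y -> F[Y] -> q_d F[Y] is a monomorphism.\<close>

definition finite_deg_le :: "nat \<Rightarrow> (nat \<Rightarrow> 'y set) \<Rightarrow> ('f::field mat \<Rightarrow> 'y \<Rightarrow> 'y) \<Rightarrow> bool" where
  "finite_deg_le d Y actY \<longleftrightarrow>
     presheaf Y actY \<and> (\<forall>v. finite (Y v)) \<and>
     (\<forall>v x y. x \<in> Y v \<and> y \<in> Y v \<and>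
        (\<lambda>z. (unit_lin x :: 'y \<Rightarrow> 'f) z - unit_lin y z) \<in> qker d Y actY v \<longrightarrow> x = y)"

end

theory Submission
  imports Defs
begin


lemma qker_iff: "a \<in> qker d X act v \<longleftrightarrow> (\<forall>K. lin_subfunctor X act K \<and> quot_deg_le X act d K \<longrightarrow> a \<in> K v)"
  unfolding qker_def by blast

lemma lin_map_in_lin:
  assumes "presheaf X act" "A \<in> carrier_mat n m"
  shows "lin_map X act A \<phi> \<in> lin X m"
proof -
  have "\<And>x. x \<in> X n \<Longrightarrow> act A x \<in> X m" using assms unfolding presheaf_def by blast
  moreover have "dim_row A = n" using assms by auto
  ultimately show ?thesis unfolding lin_def lin_map_def by (auto intro!: sum.neutral)
qed

lemma msum_carrier: "msum w v fs I \<in> carrier_mat w v"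
  unfolding msum_def by auto

lemma dev_in_lin:
  assumes "presheaf X act"
  shows "deviation X act d w v fs \<phi> \<in> lin X v"
  using lin_map_in_lin[OF assms msum_carrier] unfolding deviation_def lin_def by simp

lemma lin_sub: fixes act :: "'f::field mat \<Rightarrow> 'x \<Rightarrow> 'x"
  shows "presheaf X act \<Longrightarrow> lin_subfunctor X act (lin X)"
  unfolding lin_subfunctor_def
proof (intro conjI allI impI)
  fix n m and A :: "'f mat" and a :: "'x \<Rightarrow> 'f" assume "presheaf X act" "A \<in> carrier_mat n m \<and> a \<in> lin X n"
  then show "lin_map X act A a \<in> lin X m" using lin_map_in_lin by blast
qed (auto simp: lin_def)

lemma lin_qdl: "presheaf X act \<Longrightarrow> quot_deg_le X act d (lin X)"
  unfolding quot_deg_le_def using dev_in_lin by blast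

lemma sub_diff: "lin_subfunctor X act K \<Longrightarrow> a \<in> K n \<Longrightarrow> b \<in> K n \<Longrightarrow> (\<lambda>z. a z - b z) \<in> K n"
proof -
  assume K: "lin_subfunctor X act K" "a \<in> K n" "b \<in> K n"
  then have "(\<lambda>z. (-1) * b z) \<in> K n" unfolding lin_subfunctor_def by blast
  with K have "(\<lambda>z. a z + (\<lambda>z. (-1) * b z) z) \<in> K n" unfolding lin_subfunctor_def by blast
  then show ?thesis by simp
qed

lemma sub_add: "lin_subfunctor X act K \<Longrightarrow> a \<in> K n \<Longrightarrow> b \<in> K n \<Longrightarrow> (\<lambda>z. a z + b z) \<in> K n"
  unfolding lin_subfunctor_def by blast

lemma sub_scal: "lin_subfunctor X act K \<Longrightarrow> a \<in> K n \<Longrightarrow> (\<lambda>z. c * a z) \<in> K n"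
  unfolding lin_subfunctor_def by blast

lemma sub_zero: "lin_subfunctor X act K \<Longrightarrow> (\<lambda>z. 0) \<in> K n"
  unfolding lin_subfunctor_def by blast

lemma sub_sum:
  assumes K: "lin_subfunctor X act K" and "finite S" "\<forall>i\<in>S. a i \<in> K n"
  shows "(\<lambda>z. \<Sum>i\<in>S. c i * a i z) \<in> K n"
  using assms(2,3)
proof (induction S rule: finite_induct)
  case empty then show ?case using sub_zero[OF K] by simp
next
  case (insert x F)
  have "(\<lambda>z. (\<lambda>z. c x * a x z) z + (\<lambda>z. \<Sum>i\<in>F. c i * a i z) z) \<in> K n"
    using insert sub_add[OF K] sub_scal[OF K] by blast
  then show ?case using insert by simp
qed

lemma subI:
  assumes "\<And>n. K n \<subseteq> lin X n" "\<And>n. (\<lambda>_. 0) \<in> K n"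
    "\<And>n a b. a \<in> K n \<Longrightarrow> b \<in> K n \<Longrightarrow> (\<lambda>z. a z + b z) \<in> K n"
    "\<And>n c a. a \<in> K n \<Longrightarrow> (\<lambda>z. c * a z) \<in> K n"
    "\<And>n m A a. A \<in> carrier_mat n m \<Longrightarrow> a \<in> K n \<Longrightarrow> lin_map X act A a \<in> K m"
  shows "lin_subfunctor X act K"
  unfolding lin_subfunctor_def using assms by blast

lemma sub_map: "lin_subfunctor X act K \<Longrightarrow> A \<in> carrier_mat n m \<Longrightarrow> a \<in> K n \<Longrightarrow> lin_map X act A a \<in> K m"
  unfolding lin_subfunctor_def by blast

lemma sub_lin: "lin_subfunctor X act K \<Longrightarrow> a \<in> K n \<Longrightarrow> a \<in> lin X n"
  unfolding lin_subfunctor_def by blast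

lemma qker_sub:
  fixes act :: "'f::field mat \<Rightarrow> 'x \<Rightarrow> 'x"
  assumes "presheaf X act"
  shows "lin_subfunctor X act (qker d X act)"
proof (rule subI)
  fix n show "qker d X act n \<subseteq> lin X n"
    using lin_sub[OF assms] lin_qdl[OF assms] qker_iff by blast
  show "(\<lambda>_. 0) \<in> qker d X act n" unfolding qker_iff using sub_zero by blast
next
  fix n a b assume "a \<in> qker d X act n" "b \<in> qker d X act n"
  then show "(\<lambda>z. a z + b z) \<in> qker d X act n" unfolding qker_iff using sub_add by blast
next
  fix n c and a :: "'x \<Rightarrow> 'f" assume "a \<in> qker d X act n"
  then show "(\<lambda>z. c * a z) \<in> qker d X act n" unfolding qker_iff using sub_scal by blast
next
  fix n m and A :: "'f mat" and a :: "'x \<Rightarrow> 'f" assume "A \<in> carrier_mat n m" "a \<in> qker d X act n"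
  then show "lin_map X act A a \<in> qker d X act m" unfolding qker_iff using sub_map by blast
qed

lemma qker_qdl: "quot_deg_le X act d (qker d X act)"
  unfolding quot_deg_le_def qker_iff by (auto simp: quot_deg_le_def)

lemma qker_min: "lin_subfunctor X act K \<Longrightarrow> quot_deg_le X act d K \<Longrightarrow> qker d X act v \<subseteq> K v"
  using qker_iff by blast

lemma proj_eq_iff:
  assumes "presheaf X act"
  shows "proj d X act v a = proj d X act v b \<longleftrightarrow> (\<lambda>z. unit_lin a z - unit_lin b z) \<in> qker d X act v"
proof
  note Q = qker_sub[OF assms]
  assume e: "proj d X act v a = proj d X act v b"
  have "unit_lin a \<in> proj d X act v a" unfolding proj_def qcoset_def
    by (rule CollectI, rule exI[of _ "\<lambda>z. 0"]) (simp add: sub_zero[OF Q])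
  then have "unit_lin a \<in> proj d X act v b" by (simp only: e)
  then obtain k where "k \<in> qker d X act v" "unit_lin a = (\<lambda>z. unit_lin b z + k z)"
    unfolding proj_def qcoset_def by blast
  then show "(\<lambda>z. unit_lin a z - unit_lin b z) \<in> qker d X act v" by simp
next
  note Q = qker_sub[OF assms]
  assume k: "(\<lambda>z. unit_lin a z - unit_lin b z) \<in> qker d X act v"
  show "proj d X act v a = proj d X act v b"
    unfolding proj_def qcoset_def
  proof (intro equalityI subsetI)
    fix y assume "y \<in> {\<lambda>z. unit_lin a z + k z |k. k \<in> qker d X act v}"
    then obtain k' where k': "k' \<in> qker d X act v" "y = (\<lambda>z. unit_lin a z + k' z)" by blast
    have "(\<lambda>z. (\<lambda>z. unit_lin a z - unit_lin b z) z + k' z) \<in> qker d X act v"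
      using sub_add[OF Q k k'(1)] .
    moreover have "y = (\<lambda>z. unit_lin b z + (\<lambda>z. (\<lambda>z. unit_lin a z - unit_lin b z) z + k' z) z)"
      using k' by auto
    ultimately show "y \<in> {\<lambda>z. unit_lin b z + k z |k. k \<in> qker d X act v}"
      by (intro CollectI exI[of _ "\<lambda>z. (\<lambda>z. unit_lin a z - unit_lin b z) z + k' z"]) simp
  next
    fix y assume "y \<in> {\<lambda>z. unit_lin b z + k z |k. k \<in> qker d X act v}"
    then obtain k' where k': "k' \<in> qker d X act v" "y = (\<lambda>z. unit_lin b z + k' z)" by blast
    have "(\<lambda>z. k' z - (\<lambda>z. unit_lin a z - unit_lin b z) z) \<in> qker d X act v"
      using sub_diff[OF Q k'(1) k] .
    moreover have "y = (\<lambda>z. unit_lin a z + (\<lambda>z. k' z - (\<lambda>z. unit_lin a z - unit_lin b z) z) z)"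
      using k' by auto
    ultimately show "y \<in> {\<lambda>z. unit_lin a z + k z |k. k \<in> qker d X act v}"
      by (intro CollectI exI[of _ "\<lambda>z. k' z - (\<lambda>z. unit_lin a z - unit_lin b z) z"]) simp
  qed
qed



lemma lin_map_add: "lin_map X act A (\<lambda>z. a z + b z) = (\<lambda>y. lin_map X act A a y + lin_map X act A b y)"
  unfolding lin_map_def by (simp add: sum.distrib)

lemma lin_map_unit:
  assumes "finite (X (dim_row A))" "x \<in> X (dim_row A)"
  shows "lin_map X act A (unit_lin x) = unit_lin (act A x)"
proof
  fix y
  have "lin_map X act A (unit_lin x) y = (\<Sum>x'\<in>{x' \<in> X (dim_row A). act A x' = y}. if x' = x then 1 else 0)"
    unfolding lin_map_def unit_lin_def by (simp add: eq_commute)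
  also have "\<dots> = (if x \<in> {x' \<in> X (dim_row A). act A x' = y} then 1 else 0)"
    using assms(1) by (simp add: sum.delta)
  finally show "lin_map X act A (unit_lin x) y = unit_lin (act A x) y"
    using assms(2) unfolding unit_lin_def by auto
qed

lemma trunc_act_proj:
  assumes P: "presheaf X act" and fin: "finite (X n)" and A: "A \<in> carrier_mat n m" and x: "x \<in> X n"
  shows "trunc_act d X act A (proj d X act n x) = proj d X act m (act A x)"
proof -
  note Q = qker_sub[OF P, of d]
  have dr: "dim_row A = n" "dim_col A = m" using A by auto
  have U: "lin_map X act A (unit_lin x) = unit_lin (act A x)"
    using lin_map_unit[of X A x act] fin x dr by simp
  show ?thesis unfolding trunc_act_def proj_def qcoset_def dr
  proof (intro equalityI subsetI)
    fix y assume "y \<in> {\<lambda>z. lin_map X act A \<phi> z + k z |\<phi> k.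
              \<phi> \<in> {\<lambda>z. unit_lin x z + k z |k. k \<in> qker d X act n} \<and> k \<in> qker d X act m}"
    then obtain k k' where kk: "k \<in> qker d X act m" "k' \<in> qker d X act n"
      "y = (\<lambda>z. lin_map X act A (\<lambda>z. unit_lin x z + k' z) z + k z)" by blast
    have "lin_map X act A k' \<in> qker d X act m" using Q kk(2) A unfolding lin_subfunctor_def by blast
    then have "(\<lambda>z. lin_map X act A k' z + k z) \<in> qker d X act m" using sub_add[OF Q] kk(1) by blast
    moreover have "y = (\<lambda>z. unit_lin (act A x) z + (\<lambda>z. lin_map X act A k' z + k z) z)"
      unfolding kk(3) lin_map_add U by (simp add: add.assoc)
    ultimately show "y \<in> {\<lambda>z. unit_lin (act A x) z + k z |k. k \<in> qker d X act m}"
      by (intro CollectI exI[of _ "\<lambda>z. lin_map X act A k' z + k z"]) simp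
  next
    fix y assume "y \<in> {\<lambda>z. unit_lin (act A x) z + k z |k. k \<in> qker d X act m}"
    then obtain k where k: "k \<in> qker d X act m" "y = (\<lambda>z. unit_lin (act A x) z + k z)" by blast
    have "unit_lin x \<in> {\<lambda>z. unit_lin x z + k z |k. k \<in> qker d X act n}"
      by (rule CollectI, rule exI[of _ "\<lambda>z. 0"]) (simp add: sub_zero[OF Q])
    moreover have "y = (\<lambda>z. lin_map X act A (unit_lin x) z + k z)" using k U by simp
    ultimately show "y \<in> {\<lambda>z. lin_map X act A \<phi> z + k z |\<phi> k.
              \<phi> \<in> {\<lambda>z. unit_lin x z + k z |k. k \<in> qker d X act n} \<and> k \<in> qker d X act m}"
      using k(1) by blast
  qed
qed

lemma sum_group_pred:
  assumes "finite S" "finite T" "g ` S \<subseteq> T"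
  shows "(\<Sum>t\<in>{t\<in>T. P t}. \<Sum>x\<in>{x\<in>S. g x = t}. h x) = (\<Sum>x\<in>{x\<in>S. P (g x)}. h x)"
proof -
  have "(\<Sum>t\<in>{t\<in>T. P t}. \<Sum>x\<in>{x\<in>S. g x = t}. h x)
      = (\<Sum>t\<in>{t\<in>T. P t}. \<Sum>x\<in>{x. x \<in> {x\<in>S. P (g x)} \<and> g x = t}. h x)"
    by (rule sum.cong) (auto intro!: sum.cong)
  also have "\<dots> = (\<Sum>x\<in>{x\<in>S. P (g x)}. h x)"
    by (rule sum.group) (use assms in auto)
  finally show ?thesis .
qed

definition pf :: "(nat \<Rightarrow> 'x set) \<Rightarrow> (nat \<Rightarrow> 'x \<Rightarrow> 'y) \<Rightarrow> nat \<Rightarrow> ('x \<Rightarrow> 'f::field) \<Rightarrow> ('y \<Rightarrow> 'f)" where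
  "pf X f v \<phi> = (\<lambda>y. \<Sum>x\<in>{x\<in>X v. f v x = y}. \<phi> x)"

lemma pf_lin: "nat_trans X act Y actY f \<Longrightarrow> pf X f v \<phi> \<in> lin Y v"
  unfolding pf_def lin_def nat_trans_def by (auto intro!: sum.neutral)

lemma pf_add: "pf X f v (\<lambda>z. a z + b z) = (\<lambda>y. pf X f v a y + pf X f v b y)"
  unfolding pf_def by (simp add: sum.distrib)

lemma pf_scal: "pf X f v (\<lambda>z. c * a z) = (\<lambda>y. c * pf X f v a y)"
  unfolding pf_def by (simp add: sum_distrib_left)

lemma pf_zero: "pf X f v (\<lambda>z. 0) = (\<lambda>y. 0)"
  unfolding pf_def by simp

lemma pf_sum: "pf X f v (\<lambda>z. \<Sum>i\<in>I. c i * a i z) = (\<lambda>y. \<Sum>i\<in>I. c i * pf X f v (a i) y)"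
  unfolding pf_def by (simp add: sum_distrib_left sum.swap[of _ I])

lemma pf_unit: "finite (X v) \<Longrightarrow> x \<in> X v \<Longrightarrow> pf X f v (unit_lin x) = unit_lin (f v x)"
  unfolding pf_def unit_lin_def by (auto simp: sum.delta eq_commute[of _ x])

lemma pf_nat:
  assumes PX: "presheaf X act" and PY: "presheaf Y actY" and F: "\<forall>v. finite (X v)" "\<forall>v. finite (Y v)"
    and f: "nat_trans X act Y actY f" and A: "A \<in> carrier_mat n m"
  shows "pf X f m (lin_map X act A \<phi>) = lin_map Y actY A (pf X f n \<phi>)"
proof
  fix y
  have dr: "dim_row A = n" using A by auto
  have "pf X f m (lin_map X act A \<phi>) y
      = (\<Sum>t\<in>{t\<in>X m. f m t = y}. \<Sum>x\<in>{x\<in>X n. act A x = t}. \<phi> x)"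
    unfolding pf_def lin_map_def dr ..
  also have "\<dots> = (\<Sum>x\<in>{x\<in>X n. f m (act A x) = y}. \<phi> x)"
    by (rule sum_group_pred) (use F PX A in \<open>auto simp: presheaf_def\<close>)
  also have "\<dots> = (\<Sum>x\<in>{x\<in>X n. actY A (f n x) = y}. \<phi> x)"
    using f A unfolding nat_trans_def by (intro sum.cong) auto
  also have "\<dots> = (\<Sum>t\<in>{t\<in>Y n. actY A t = y}. \<Sum>x\<in>{x\<in>X n. f n x = t}. \<phi> x)"
    by (rule sum_group_pred[symmetric]) (use F f in \<open>auto simp: nat_trans_def\<close>)
  also have "\<dots> = lin_map Y actY A (pf X f n \<phi>) y"
    unfolding pf_def lin_map_def dr ..
  finally show "pf X f m (lin_map X act A \<phi>) y = lin_map Y actY A (pf X f n \<phi>) y" .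
qed

lemma pf_dev:
  assumes PX: "presheaf X act" and PY: "presheaf Y actY" and F: "\<forall>v. finite (X v)" "\<forall>v. finite (Y v)"
    and f: "nat_trans X act Y actY f"
  shows "pf X f v (deviation X act d w v fs \<phi>) = deviation Y actY d w v fs (pf X f w \<phi>)"
  unfolding deviation_def pf_sum pf_nat[OF PX PY F f msum_carrier] ..

lemma pf_qker:
  fixes act :: "'f::field mat \<Rightarrow> 'x \<Rightarrow> 'x"
  assumes PX: "presheaf X act" and PY: "presheaf Y actY" and F: "\<forall>v. finite (X v)" "\<forall>v. finite (Y v)"
    and f: "nat_trans X act Y actY f" and \<phi>: "\<phi> \<in> qker d X act v"
  shows "pf X f v \<phi> \<in> qker d Y actY v"
proof -
  define K where "K n = {\<phi> \<in> lin X n. pf X f n \<phi> \<in> qker d Y actY n}" for n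
  note QY = qker_sub[OF PY, of d]
  note LX = lin_sub[OF PX]
  have "lin_subfunctor X act K"
    unfolding lin_subfunctor_def
  proof (intro conjI allI impI)
    fix n show "K n \<subseteq> lin X n" unfolding K_def by auto
    show "(\<lambda>_. 0) \<in> K n" unfolding K_def using sub_zero[OF QY] sub_zero[OF LX] by (auto simp: pf_zero)
    show "\<And>a b. a \<in> K n \<Longrightarrow> b \<in> K n \<Longrightarrow> (\<lambda>z. a z + b z) \<in> K n"
      unfolding K_def using sub_add[OF QY] sub_add[OF LX] by (auto simp: pf_add)
    show "\<And>c a. a \<in> K n \<Longrightarrow> (\<lambda>z. c * a z) \<in> K n"
      unfolding K_def using sub_scal[OF QY] sub_scal[OF LX] by (auto simp: pf_scal)
  next
    fix n m and A :: "'f mat" and a :: "'x \<Rightarrow> 'f" assume "A \<in> carrier_mat n m \<and> a \<in> K n"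
    then have A: "A \<in> carrier_mat n m" and a: "a \<in> lin X n" "pf X f n a \<in> qker d Y actY n"
      unfolding K_def by auto
    have "lin_map Y actY A (pf X f n a) \<in> qker d Y actY m" by (rule sub_map[OF QY A a(2)])
    then show "lin_map X act A a \<in> K m"
      unfolding K_def using lin_map_in_lin[OF PX A] by (simp add: pf_nat[OF PX PY F f A])
  qed
  moreover have "quot_deg_le X act d K"
    unfolding quot_deg_le_def
  proof (intro allI impI)
    fix w v and fs :: "nat \<Rightarrow> 'f mat" and \<psi> :: "'x \<Rightarrow> 'f" assume as: "(\<forall>k\<in>{0..d}. fs k \<in> carrier_mat w v) \<and> \<psi> \<in> lin X w"
    have "deviation Y actY d w v fs (pf X f w \<psi>) \<in> qker d Y actY v"
      using qker_qdl[of Y actY d] pf_lin[OF f] as unfolding quot_deg_le_def by blast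
    then show "deviation X act d w v fs \<psi> \<in> K v"
      unfolding K_def using dev_in_lin[OF PX] by (simp add: pf_dev[OF PX PY F f])
  qed
  ultimately show ?thesis using qker_min \<phi> unfolding K_def by blast
qed



lemma pow_split:
  assumes "finite S" "a \<notin> S"
  shows "sum g (Pow (insert a S)) = sum g (Pow S) + sum (\<lambda>I. g (insert a I)) (Pow S)"
proof -
  have inj: "inj_on (insert a) (Pow S)" using assms(2) unfolding inj_on_def
    by (metis PowD insert_ident subsetD)
  have "sum g (Pow (insert a S)) = sum g (Pow S \<union> insert a ` Pow S)" by (simp add: Pow_insert)
  also have "\<dots> = sum g (Pow S) + sum g (insert a ` Pow S)"
    by (rule sum.union_disjoint) (use assms in auto)
  also have "sum g (insert a ` Pow S) = sum (\<lambda>I. g (insert a I)) (Pow S)"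
    using sum.reindex[OF inj] by simp
  finally show ?thesis .
qed

lemma msum_cong: "(\<And>k. k \<in> I \<Longrightarrow> fs k = gs k) \<Longrightarrow> msum w v fs I = msum w v gs I"
  unfolding msum_def by (auto intro!: arg_cong[where f="mat w v"] sum.cong)

lemma sum_upd_other: "a \<notin> J \<Longrightarrow> (\<Sum>k\<in>J. (fs(a := x)) k $$ p) = (\<Sum>k\<in>J. fs k $$ p)"
  by (rule sum.cong) auto

lemma sum_if_other: "a \<notin> J \<Longrightarrow> (\<Sum>k\<in>J. (if k = a then x else fs k) $$ p) = (\<Sum>k\<in>J. fs k $$ p)"
  by (rule sum.cong) auto

lemma msum_upd1:
  assumes "finite J" "a \<notin> J" "b \<notin> J"
  shows "msum w v (fs(a := fs b)) (insert a J) = msum w v fs (insert b J)"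
  unfolding msum_def using assms by (simp add: sum_upd_other sum_if_other)

lemma msum_upd2:
  assumes "finite J" "a \<notin> J" "b \<notin> J" "a \<noteq> b" "fs a \<in> carrier_mat w v" "fs b \<in> carrier_mat w v"
  shows "msum w v (fs(a := fs a + fs b)) (insert a J) = msum w v fs (insert b (insert a J))"
  by (rule eq_matI) (use assms in \<open>auto simp: msum_def sum_upd_other sum_if_other\<close>)

definition Dv where
  "Dv X act w v fs S \<phi> z = (\<Sum>I\<in>Pow S. (-1) ^ card I * lin_map X act (msum w v fs I) \<phi> z)"

lemma dev_step:
  assumes S: "finite S" "a \<notin> S" "b \<notin> S" "a \<noteq> b" and C: "fs a \<in> carrier_mat w v" "fs b \<in> carrier_mat w v"
  shows "Dv X act w v fs (insert b (insert a S)) \<phi> z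
       = Dv X act w v fs (insert a S) \<phi> z + Dv X act w v (fs(a := fs b)) (insert a S) \<phi> z
         - Dv X act w v (fs(a := fs a + fs b)) (insert a S) \<phi> z"
proof -
  define g where "g gs I = (-1) ^ card I * lin_map X act (msum w v gs I) \<phi> z" for gs I
  have D: "Dv X act w v gs T \<phi> z = sum (g gs) (Pow T)" for gs T unfolding Dv_def g_def ..
  have fa: "finite (insert a S)" "b \<notin> insert a S" using S by auto
  have L: "sum (g fs) (Pow (insert b (insert a S)))
     = sum (g fs) (Pow S) + sum (\<lambda>I. g fs (insert a I)) (Pow S)
       + (sum (\<lambda>I. g fs (insert b I)) (Pow S) + sum (\<lambda>I. g fs (insert b (insert a I))) (Pow S))"
    unfolding pow_split[OF fa] pow_split[OF S(1,2)] by simp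
  have R1: "sum (g fs) (Pow (insert a S)) = sum (g fs) (Pow S) + sum (\<lambda>I. g fs (insert a I)) (Pow S)"
    by (rule pow_split[OF S(1,2)])
  have R2: "sum (g (fs(a := fs b))) (Pow (insert a S)) = sum (g fs) (Pow S) + sum (\<lambda>I. g fs (insert b I)) (Pow S)"
  proof -
    have "g (fs(a := fs b)) I = g fs I" if "I \<in> Pow S" for I
      unfolding g_def using that S by (auto intro!: arg_cong[where f="\<lambda>M. lin_map X act M \<phi> z"] msum_cong)
    moreover have "g (fs(a := fs b)) (insert a I) = g fs (insert b I)" if "I \<in> Pow S" for I
    proof -
      have fI: "finite I" "a \<notin> I" "b \<notin> I" using that S finite_subset by auto
      then show ?thesis unfolding g_def msum_upd1[OF fI] by simp
    qed
    ultimately have "sum (g (fs(a := fs b))) (Pow S) = sum (g fs) (Pow S)"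
      "sum (\<lambda>I. g (fs(a := fs b)) (insert a I)) (Pow S) = sum (\<lambda>I. g fs (insert b I)) (Pow S)"
      by (auto intro!: sum.cong simp del: Pow_iff)
    then show ?thesis unfolding pow_split[OF S(1,2)] by simp
  qed
  have R3: "sum (g (fs(a := fs a + fs b))) (Pow (insert a S)) = sum (g fs) (Pow S) - sum (\<lambda>I. g fs (insert b (insert a I))) (Pow S)"
  proof -
    have "g (fs(a := fs a + fs b)) I = g fs I" if "I \<in> Pow S" for I
      unfolding g_def using that S by (auto intro!: arg_cong[where f="\<lambda>M. lin_map X act M \<phi> z"] msum_cong)
    moreover have "g (fs(a := fs a + fs b)) (insert a I) = - g fs (insert b (insert a I))" if "I \<in> Pow S" for I
    proof -
      have fI: "finite I" "a \<notin> I" "b \<notin> I" using that S finite_subset by auto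
      then show ?thesis unfolding g_def msum_upd2[OF fI S(4) C] using S(4) by simp
    qed
    ultimately have "sum (g (fs(a := fs a + fs b))) (Pow S) = sum (g fs) (Pow S)"
      "sum (\<lambda>I. g (fs(a := fs a + fs b)) (insert a I)) (Pow S) = sum (\<lambda>I. - g fs (insert b (insert a I))) (Pow S)"
      by (auto intro!: sum.cong simp del: Pow_iff)
    then show ?thesis unfolding pow_split[OF S(1,2)] by (simp add: sum_negf)
  qed
  show ?thesis unfolding D L R1 R2 R3 by simp
qed

lemma qdl_Suc:
  fixes act :: "'f::field mat \<Rightarrow> 'x \<Rightarrow> 'x"
  assumes K: "lin_subfunctor X act K" and Q: "quot_deg_le X act d K"
  shows "quot_deg_le X act (Suc d) K"
  unfolding quot_deg_le_def
proof (intro allI impI)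
  fix w v and fs :: "nat \<Rightarrow> 'f mat" and \<phi> :: "'x \<Rightarrow> 'f" assume as: "(\<forall>k\<in>{0..Suc d}. fs k \<in> carrier_mat w v) \<and> \<phi> \<in> lin X w"
  have dv: "deviation X act e w v gs \<phi> = Dv X act w v gs {0..e} \<phi>" for e gs
    unfolding deviation_def Dv_def by auto
  have s1: "{0..Suc d} = insert (Suc d) (insert d {0..<d})" and s2: "{0..d} = insert d {0..<d}" by auto
  have C: "fs d \<in> carrier_mat w v" "fs (Suc d) \<in> carrier_mat w v" using as by auto
  have E: "deviation X act (Suc d) w v fs \<phi> = (\<lambda>z. (\<lambda>z. deviation X act d w v fs \<phi> z
      + deviation X act d w v (fs(d := fs (Suc d))) \<phi> z) z - deviation X act d w v (fs(d := fs d + fs (Suc d))) \<phi> z)"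
    unfolding dv s1 s2 using dev_step[of "{0..<d}" d "Suc d" fs w v X act \<phi>] C by auto
  have c1: "\<forall>k\<in>{0..d}. fs k \<in> carrier_mat w v" using as by auto
  have c2: "\<forall>k\<in>{0..d}. (fs(d := fs (Suc d))) k \<in> carrier_mat w v" using as by auto
  have c3: "\<forall>k\<in>{0..d}. (fs(d := fs d + fs (Suc d))) k \<in> carrier_mat w v" using as by auto
  show "deviation X act (Suc d) w v fs \<phi> \<in> K v"
    unfolding E
    by (rule sub_diff[OF K sub_add[OF K]]) (use Q c1 c2 c3 as in \<open>auto simp: quot_deg_le_def\<close>)
qed

lemma qker_Suc:
  assumes "presheaf X act"
  shows "qker (Suc d) X act v \<subseteq> qker d X act v"
  by (rule qker_min[OF qker_sub[OF assms] qdl_Suc[OF qker_sub[OF assms] qker_qdl]])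



lemma pf_diff: "pf X f v (\<lambda>z. a z - b z) = (\<lambda>y. pf X f v a y - pf X f v b y)"
  unfolding pf_def by (simp add: sum_subtractf)

lemma pf_surj:
  assumes F: "finite (X w)" and su: "\<forall>y\<in>Y w. \<exists>x\<in>X w. f w x = y"
    and f: "nat_trans X act Y actY f" and \<psi>: "\<psi> \<in> lin Y w"
  shows "\<exists>\<phi>\<in>lin X w. pf X f w \<phi> = \<psi>"
proof -
  define r where "r y = (SOME x. x \<in> X w \<and> f w x = y)" for y
  have r: "r y \<in> X w" "f w (r y) = y" if "y \<in> Y w" for y
    using someI_ex[of "\<lambda>x. x \<in> X w \<and> f w x = y"] su that unfolding r_def by blast+
  define \<phi> where "\<phi> x = (if x \<in> X w \<and> r (f w x) = x then \<psi> (f w x) else 0)" for x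
  have "\<phi> \<in> lin X w" unfolding lin_def \<phi>_def by auto
  moreover have "pf X f w \<phi> = \<psi>"
  proof
    fix y
    show "pf X f w \<phi> y = \<psi> y"
    proof (cases "y \<in> Y w")
      case True
      have "pf X f w \<phi> y = (\<Sum>x\<in>{x\<in>X w. f w x = y}. if r y = x then \<psi> y else 0)"
        unfolding pf_def \<phi>_def by (rule sum.cong) auto
      also have "\<dots> = \<psi> y" using F r[OF True] by (simp add: sum.delta)
      finally show ?thesis .
    next
      case False
      have "{x\<in>X w. f w x = y} = {}" using False f unfolding nat_trans_def by auto
      moreover have "\<psi> y = 0" using \<psi> False unfolding lin_def by auto
      ultimately show ?thesis unfolding pf_def by (simp only: sum.empty)
    qed
  qed
  ultimately show ?thesis by blast
qed

lemma qker_image: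
  fixes act :: "'f::field mat \<Rightarrow> 'x \<Rightarrow> 'x" and actY :: "'f mat \<Rightarrow> 'y \<Rightarrow> 'y"
  assumes PX: "presheaf X act" and PY: "presheaf Y actY" and F: "\<forall>v. finite (X v)" "\<forall>v. finite (Y v)"
    and f: "nat_trans X act Y actY f" and su: "\<forall>v. \<forall>y\<in>Y v. \<exists>x\<in>X v. f v x = y"
  shows "qker d Y actY v \<subseteq> {pf X f v \<phi> | \<phi>. \<phi> \<in> qker d X act v}"
proof -
  define K where "K n = {pf X f n \<phi> | \<phi>. \<phi> \<in> qker d X act n}" for n
  note QX = qker_sub[OF PX, of d]
  have "lin_subfunctor Y actY K"
  proof (rule subI)
    fix n show "K n \<subseteq> lin Y n" unfolding K_def using pf_lin[OF f] by blast
    have "pf X f n (\<lambda>_. 0) \<in> K n" unfolding K_def using sub_zero[OF QX] by blast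
    then show "(\<lambda>_. 0) \<in> K n" by (simp add: pf_zero)
  next
    fix n and a b :: "'y \<Rightarrow> 'f" assume "a \<in> K n" "b \<in> K n"
    then obtain p q where "p \<in> qker d X act n" "q \<in> qker d X act n" "a = pf X f n p" "b = pf X f n q"
      unfolding K_def by blast
    then show "(\<lambda>z. a z + b z) \<in> K n" unfolding K_def
      by (intro CollectI exI[of _ "\<lambda>z. p z + q z"]) (simp add: pf_add sub_add[OF QX])
  next
    fix n c and a :: "'y \<Rightarrow> 'f" assume "a \<in> K n"
    then obtain p where "p \<in> qker d X act n" "a = pf X f n p"
      unfolding K_def by blast
    then show "(\<lambda>z. c * a z) \<in> K n" unfolding K_def
      by (intro CollectI exI[of _ "\<lambda>z. c * p z"]) (simp add: pf_scal sub_scal[OF QX])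
  next
    fix n m and A :: "'f mat" and a :: "'y \<Rightarrow> 'f" assume A: "A \<in> carrier_mat n m" and "a \<in> K n"
    then obtain p where "p \<in> qker d X act n" "a = pf X f n p"
      unfolding K_def by blast
    then show "lin_map Y actY A a \<in> K m" unfolding K_def
      by (intro CollectI exI[of _ "lin_map X act A p"]) (simp add: pf_nat[OF PX PY F f A] sub_map[OF QX A])
  qed
  moreover have "quot_deg_le Y actY d K"
    unfolding quot_deg_le_def
  proof (intro allI impI)
    fix w v and fs :: "nat \<Rightarrow> 'f mat" and \<psi> :: "'y \<Rightarrow> 'f"
    assume as: "(\<forall>k\<in>{0..d}. fs k \<in> carrier_mat w v) \<and> \<psi> \<in> lin Y w"
    then obtain \<phi> where \<phi>: "\<phi> \<in> lin X w" "pf X f w \<phi> = \<psi>" using pf_surj[OF _ _ f] F su by blast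
    have "deviation X act d w v fs \<phi> \<in> qker d X act v"
      using qker_qdl[of X act d] \<phi> as unfolding quot_deg_le_def by blast
    then show "deviation Y actY d w v fs \<psi> \<in> K v" unfolding K_def
      by (intro CollectI exI[of _ "deviation X act d w v fs \<phi>"]) (simp add: pf_dev[OF PX PY F f] \<phi>(2))
  qed
  ultimately show ?thesis using qker_min unfolding K_def by blast
qed



lemma proj_nat:
  assumes P: "presheaf X act" and F: "\<forall>v. finite (X v)"
  shows "nat_trans X act (trunc d X act) (trunc_act d X act) (proj d X act)"
  unfolding nat_trans_def trunc_def
  using trunc_act_proj[OF P] F by auto

lemma trunc_presheaf:
  fixes act :: "'f::field mat \<Rightarrow> 'x \<Rightarrow> 'x"
  assumes P: "presheaf X act" and F: "\<forall>v. finite (X v)"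
  shows "presheaf (trunc d X act) (trunc_act d X act)"
  unfolding presheaf_def
proof (intro conjI allI impI)
  fix n m and A :: "'f mat" and c assume as: "A \<in> carrier_mat n m \<and> c \<in> trunc d X act n"
  then obtain x where x: "x \<in> X n" "c = proj d X act n x" unfolding trunc_def by blast
  have "act A x \<in> X m" using P as x unfolding presheaf_def by blast
  then show "trunc_act d X act A c \<in> trunc d X act m"
    unfolding x(2) trunc_act_proj[OF P F[rule_format] conjunct1[OF as] x(1)] trunc_def by blast
next
  fix n c assume as: "c \<in> trunc d X act n"
  then obtain x where x: "x \<in> X n" "c = proj d X act n x" unfolding trunc_def by blast
  have "act (1\<^sub>m n) x = x" using P x unfolding presheaf_def by blast
  then show "trunc_act d X act (1\<^sub>m n) c = c"
    unfolding x(2) using trunc_act_proj[OF P F[rule_format] one_carrier_mat x(1)] by simp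
next
  fix n m k and A B :: "'f mat" and c assume as: "A \<in> carrier_mat n m \<and> B \<in> carrier_mat m k \<and> c \<in> trunc d X act n"
  then obtain x where x: "x \<in> X n" "c = proj d X act n x" unfolding trunc_def by blast
  have AB: "A * B \<in> carrier_mat n k" using as by auto
  have e: "act (A * B) x = act B (act A x)" and ax: "act A x \<in> X m" using P x as unfolding presheaf_def by blast+
  show "trunc_act d X act (A * B) c = trunc_act d X act B (trunc_act d X act A c)"
    unfolding x(2) trunc_act_proj[OF P F[rule_format] AB x(1)]
      trunc_act_proj[OF P F[rule_format] conjunct1[OF as] x(1)]
      trunc_act_proj[OF P F[rule_format] conjunct1[OF conjunct2[OF as]] ax] e ..
qed

lemma sum_unit: "finite T \<Longrightarrow> c \<in> T \<Longrightarrow> (\<Sum>t\<in>T. a t * unit_lin c t) = a c"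
proof -
  assume "finite T" "c \<in> T"
  have "(\<Sum>t\<in>T. a t * unit_lin c t) = (\<Sum>t\<in>T. if t = c then a c else 0)"
    unfolding unit_lin_def by (rule sum.cong) auto
  then show ?thesis using \<open>finite T\<close> \<open>c \<in> T\<close> by (simp add: sum.delta')
qed

lemma trunc_fdl:
  fixes act :: "'f::field mat \<Rightarrow> 'x \<Rightarrow> 'x"
  assumes P: "presheaf X act" and F: "\<forall>v. finite (X v)"
  shows "finite_deg_le d (trunc d X act) (trunc_act d X act)"
  unfolding finite_deg_le_def
proof (intro conjI allI impI)
  note PY = trunc_presheaf[OF P F, of d]
  show "presheaf (trunc d X act) (trunc_act d X act)" by (rule PY)
  have FY: "\<forall>v. finite (trunc d X act v)" using F unfolding trunc_def by auto
  then show "\<And>v. finite (trunc d X act v)" by blast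
  fix v c1 c2
  assume as: "c1 \<in> trunc d X act v \<and> c2 \<in> trunc d X act v \<and>
      (\<lambda>z. (unit_lin c1 :: _ \<Rightarrow> 'f) z - unit_lin c2 z) \<in> qker d (trunc d X act) (trunc_act d X act) v"
  let ?Y = "trunc d X act" and ?p = "proj d X act"
  have su: "\<forall>v. \<forall>y\<in>?Y v. \<exists>x\<in>X v. ?p v x = y" unfolding trunc_def by blast
  obtain \<phi> where \<phi>: "\<phi> \<in> qker d X act v" "pf X ?p v \<phi> = (\<lambda>z. (unit_lin c1 :: _ \<Rightarrow> 'f) z - unit_lin c2 z)"
  proof -
    have "(\<lambda>z. (unit_lin c1 :: _ \<Rightarrow> 'f) z - unit_lin c2 z) \<in> {pf X ?p v \<phi> | \<phi>. \<phi> \<in> qker d X act v}"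
      by (rule subsetD[OF qker_image[OF P PY F FY proj_nat[OF P F] su, of d v]]) (rule conjunct2[OF conjunct2[OF as]])
    then obtain \<psi> where \<psi>: "(\<lambda>z. (unit_lin c1 :: _ \<Rightarrow> 'f) z - unit_lin c2 z) = pf X ?p v \<psi>" "\<psi> \<in> qker d X act v"
      by (auto simp only: mem_Collect_eq)
    show ?thesis by (rule that[OF \<psi>(2) \<psi>(1)[symmetric]])
  qed
  note QX = qker_sub[OF P, of d]
  have \<phi>lin: "\<phi> \<in> lin X v" using sub_lin[OF QX \<phi>(1)] .
  define r where "r c = (SOME x. x \<in> X v \<and> ?p v x = c)" for c
  have r: "r c \<in> X v" "?p v (r c) = c" if "c \<in> ?Y v" for c
    using someI_ex[of "\<lambda>x. x \<in> X v \<and> ?p v x = c"] su that unfolding r_def by blast+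
  have px: "?p v x \<in> ?Y v" if "x \<in> X v" for x using that unfolding trunc_def by blast
  define \<theta> where "\<theta> = (\<lambda>z. \<Sum>x\<in>X v. \<phi> x * (\<lambda>x z. unit_lin x z - unit_lin (r (?p v x)) z) x z)"
  have "\<theta> \<in> qker d X act v" unfolding \<theta>_def
  proof (rule sub_sum[OF QX])
    show "finite (X v)" using F by blast
    show "\<forall>x\<in>X v. (\<lambda>z. unit_lin x z - unit_lin (r (?p v x)) z) \<in> qker d X act v"
      using proj_eq_iff[OF P] r px by metis
  qed
  have \<phi>e: "\<phi> z = (\<Sum>x\<in>X v. \<phi> x * unit_lin x z)" for z
  proof (cases "z \<in> X v")
    case True
    have "(\<Sum>x\<in>X v. \<phi> x * unit_lin x z) = (\<Sum>x\<in>X v. if x = z then \<phi> z else 0)"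
      unfolding unit_lin_def by (rule sum.cong) auto
    also have "\<dots> = \<phi> z" using F True by (simp add: sum.delta')
    finally show ?thesis by simp
  next
    case False
    have "(\<Sum>x\<in>X v. \<phi> x * unit_lin x z) = (\<Sum>x\<in>X v. 0)"
      unfolding unit_lin_def using False by (intro sum.cong) auto
    then show ?thesis using \<phi>lin False unfolding lin_def by simp
  qed
  have "(\<lambda>z. \<phi> z - \<theta> z) \<in> qker d X act v" using sub_diff[OF QX \<phi>(1) \<open>\<theta> \<in> _\<close>] .
  moreover have "(\<lambda>z. \<phi> z - \<theta> z) = (\<lambda>z. unit_lin (r c1) z - unit_lin (r c2) z)"
  proof
    fix z
    have "\<phi> z - \<theta> z = (\<Sum>x\<in>X v. \<phi> x * unit_lin (r (?p v x)) z)"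
      unfolding \<theta>_def \<phi>e[of z] by (simp add: right_diff_distrib sum_subtractf)
    also have "\<dots> = (\<Sum>c\<in>?Y v. \<Sum>x\<in>{x\<in>X v. ?p v x = c}. \<phi> x * unit_lin (r (?p v x)) z)"
      by (rule sum.group[symmetric]) (use F FY px in auto)
    also have "\<dots> = (\<Sum>c\<in>?Y v. unit_lin (r c) z * pf X ?p v \<phi> c)"
      unfolding pf_def by (rule sum.cong) (auto simp: sum_distrib_left mult.commute intro!: sum.cong)
    also have "\<dots> = (\<Sum>c\<in>?Y v. unit_lin (r c) z * unit_lin c1 c - unit_lin (r c) z * unit_lin c2 c)"
      unfolding \<phi>(2) by (simp add: right_diff_distrib)
    also have "\<dots> = unit_lin (r c1) z - unit_lin (r c2) z"
      using as FY by (simp add: sum_subtractf sum_unit[of _ _ "\<lambda>c. unit_lin (r c) z"])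
    finally show "\<phi> z - \<theta> z = unit_lin (r c1) z - unit_lin (r c2) z" .
  qed
  ultimately have "?p v (r c1) = ?p v (r c2)" using proj_eq_iff[OF P] by metis
  then show "c1 = c2" using r as by metis
qed

lemma fdl_Suc: "finite_deg_le d Y actY \<Longrightarrow> finite_deg_le (Suc d) Y actY"
  unfolding finite_deg_le_def using qker_Suc by blast

lemma univ:
  fixes act :: "'f::field mat \<Rightarrow> 'x \<Rightarrow> 'x" and actY :: "'f mat \<Rightarrow> 'y \<Rightarrow> 'y"
  assumes P: "presheaf X act" and F: "\<forall>v. finite (X v)"
    and Y: "finite_deg_le d Y actY" and g: "nat_trans X act Y actY g"
  shows "\<exists>h. nat_trans (trunc d X act) (trunc_act d X act) Y actY h
             \<and> (\<forall>v x. x \<in> X v \<longrightarrow> h v (proj d X act v x) = g v x)"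
proof -
  have PY: "presheaf Y actY" and FY: "\<forall>v. finite (Y v)"
    and mono: "\<And>v x y. x \<in> Y v \<Longrightarrow> y \<in> Y v \<Longrightarrow>
        (\<lambda>z. (unit_lin x :: 'y \<Rightarrow> 'f) z - unit_lin y z) \<in> qker d Y actY v \<Longrightarrow> x = y"
    using Y unfolding finite_deg_le_def by blast+
  have gY: "g v x \<in> Y v" if "x \<in> X v" for v x using g that unfolding nat_trans_def by blast
  have wd: "g v x = g v x'" if "x \<in> X v" "x' \<in> X v" "proj d X act v x = proj d X act v x'" for v x x'
  proof -
    have "(\<lambda>z. (unit_lin x :: 'x \<Rightarrow> 'f) z - unit_lin x' z) \<in> qker d X act v"
      using proj_eq_iff[OF P] that(3) by blast
    then have "pf X g v (\<lambda>z. (unit_lin x :: 'x \<Rightarrow> 'f) z - unit_lin x' z) \<in> qker d Y actY v"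
      by (rule pf_qker[OF P PY F FY g])
    then have "(\<lambda>z. (unit_lin (g v x) :: 'y \<Rightarrow> 'f) z - unit_lin (g v x') z) \<in> qker d Y actY v"
      unfolding pf_diff using pf_unit F that by metis
    then show ?thesis using mono gY that by blast
  qed
  define h where "h v c = g v (SOME x. x \<in> X v \<and> proj d X act v x = c)" for v c
  have hp: "h v (proj d X act v x) = g v x" if "x \<in> X v" for v x
  proof -
    have "\<exists>x'. x' \<in> X v \<and> proj d X act v x' = proj d X act v x" using that by blast
    from someI_ex[OF this] show ?thesis unfolding h_def using wd that by blast
  qed
  have "nat_trans (trunc d X act) (trunc_act d X act) Y actY h"
    unfolding nat_trans_def
  proof (intro conjI allI impI)
    fix n c assume "c \<in> trunc d X act n"
    then obtain x where x: "x \<in> X n" "c = proj d X act n x" unfolding trunc_def by blast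
    then show "h n c \<in> Y n" using hp gY by simp
  next
    fix n m and A :: "'f mat" and c assume as: "A \<in> carrier_mat n m \<and> c \<in> trunc d X act n"
    then obtain x where x: "x \<in> X n" "c = proj d X act n x" unfolding trunc_def by blast
    have ax: "act A x \<in> X m" using P as x unfolding presheaf_def by blast
    show "h m (trunc_act d X act A c) = actY A (h n c)"
      unfolding x(2) trunc_act_proj[OF P F[rule_format] conjunct1[OF as] x(1)] hp[OF ax] hp[OF x(1)]
      using g as x unfolding nat_trans_def by blast
  qed
  then show ?thesis using hp by blast
qed

theorem proposition3p11:
  fixes X :: "nat \<Rightarrow> 'x set" and act :: "'f::{finite,field} mat \<Rightarrow> 'x \<Rightarrow> 'x"
  assumes "prime (card (UNIV :: 'f set))"
    and "presheaf X act"
    and "\<forall>v. finite (X v)"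
  shows "\<forall>d. finite_deg_le d (trunc d X act) (trunc_act d X act)
           \<and> nat_trans X act (trunc d X act) (trunc_act d X act) (proj d X act)
           \<and> (\<forall>(Y :: nat \<Rightarrow> 'y set) actY g.
                 finite_deg_le d Y actY \<and> nat_trans X act Y actY g \<longrightarrow>
                 (\<exists>h. nat_trans (trunc d X act) (trunc_act d X act) Y actY h
                      \<and> (\<forall>v x. x \<in> X v \<longrightarrow> h v (proj d X act v x) = g v x))
                 \<and> (\<forall>h h'. nat_trans (trunc d X act) (trunc_act d X act) Y actY h
                      \<and> (\<forall>v x. x \<in> X v \<longrightarrow> h v (proj d X act v x) = g v x)
                      \<and> nat_trans (trunc d X act) (trunc_act d X act) Y actY h'
                      \<and> (\<forall>v x. x \<in> X v \<longrightarrow> h' v (proj d X act v x) = g v x)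
                      \<longrightarrow> (\<forall>v c. c \<in> trunc d X act v \<longrightarrow> h v c = h' v c)))
           \<and> (\<exists>t. nat_trans (trunc (Suc d) X act) (trunc_act (Suc d) X act)
                             (trunc d X act) (trunc_act d X act) t
                  \<and> (\<forall>v x. x \<in> X v \<longrightarrow> t v (proj (Suc d) X act v x) = proj d X act v x))"
proof (intro allI conjI impI)
  fix d
  note P = assms(2) and F = assms(3)
  show "finite_deg_le d (trunc d X act) (trunc_act d X act)" by (rule trunc_fdl[OF P F])
  show "nat_trans X act (trunc d X act) (trunc_act d X act) (proj d X act)" by (rule proj_nat[OF P F])
  fix Y :: "nat \<Rightarrow> 'y set" and actY g
  assume "finite_deg_le d Y actY \<and> nat_trans X act Y actY g"
  then show "\<exists>h. nat_trans (trunc d X act) (trunc_act d X act) Y actY h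
                      \<and> (\<forall>v x. x \<in> X v \<longrightarrow> h v (proj d X act v x) = g v x)"
    using univ[OF P F] by blast
next
  fix d Y actY g h h' v c
  assume as: "nat_trans (trunc d X act) (trunc_act d X act) Y actY h
                      \<and> (\<forall>v x. x \<in> X v \<longrightarrow> h v (proj d X act v x) = g v x)
                      \<and> nat_trans (trunc d X act) (trunc_act d X act) Y actY h'
                      \<and> (\<forall>v x. x \<in> X v \<longrightarrow> h' v (proj d X act v x) = g v x)"
    and c: "c \<in> trunc d X act v"
  then obtain x where "x \<in> X v" "c = proj d X act v x" unfolding trunc_def by blast
  then show "h v c = h' v c" using as by simp
next
  fix d
  note P = assms(2) and F = assms(3)
  show "\<exists>t. nat_trans (trunc (Suc d) X act) (trunc_act (Suc d) X act)
                             (trunc d X act) (trunc_act d X act) t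
                  \<and> (\<forall>v x. x \<in> X v \<longrightarrow> t v (proj (Suc d) X act v x) = proj d X act v x)"
    by (rule univ[OF P F fdl_Suc[OF trunc_fdl[OF P F]] proj_nat[OF P F]])
qed

end
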